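(* For any 2-CNF $\Phi$, the pruned 2-CNF $\hat\Phi$ is satisfiable.
   Context: A 2-CNF is a conjunction of clauses, each clause being the disjunction of two literals on two distinct variables. A clause $l\vee\neg l'$ is read as the implication $l'\to l$. For a 2-CNF $\Phi$ and a set $\mathcal L_0$ of literals, define $\mathcal L(\Phi,\mathcal L_0)$ as the output of Unit Clause Propagation: start with $\mathcal L=\mathcal L_0$ and, as long as $\Phi$ contains a clause $l\vee\neg l'$ with $l'\in\mathcal L$ and $l\notin\mathcal L$, add $l$ to $\mathcal L$. Let $\mathcal V_0(\Phi,\mathcal L_0)$ be the set of variables $x$ with both $x,\neg x\in\mathcal L(\Phi,\mathcal L_0)$. The set of conflict clauses $\mathcal C(\Phi,\mathcal L_0)$ is the set of clauses $a$ of $\Phi$ all of whose variables lie in $\mathcal V_0(\Phi,\mathcal L_0)$. The pruned formula $\hat\Phi$ is obtained from $\Phi$ by deleting all clauses in $\bigcup_l\mathcal C(\Phi,\{l\})$, where the union ranges over all literals $l\in\{x,\neg x\}$ with $x$ a variable of $\Phi$. *)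

theory Defs
  imports Main
begin

datatype 'v lit = Pos 'v | Neg 'v

fun var :: "'v lit \<Rightarrow> 'v" where
  "var (Pos x) = x" | "var (Neg x) = x"

fun neg :: "'v lit \<Rightarrow> 'v lit" where
  "neg (Pos x) = Neg x" | "neg (Neg x) = Pos x"

text \<open>A clause is a disjunction of two literals on distinct variables, represented
  as a pair; a 2-CNF is a finite set of such clauses.\<close>
type_synonym 'v clause = "'v lit \<times> 'v lit"

definition clause_vars :: "'v clause \<Rightarrow> 'v set" where
  "clause_vars c = {var (fst c), var (snd c)}"

definition is_2cnf :: "'v clause set \<Rightarrow> bool" where
  "is_2cnf \<Phi> \<longleftrightarrow> finite \<Phi> \<and> (\<forall>c\<in>\<Phi>. var (fst c) \<noteq> var (snd c))"

definition cnf_vars :: "'v clause set \<Rightarrow> 'v set" where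
  "cnf_vars \<Phi> = (\<Union>c\<in>\<Phi>. clause_vars c)"

text \<open>A clause (a,b) = a \<or> b can be read as a \<or> \<not>(neg b) and as b \<or> \<not>(neg a).\<close>
inductive_set ucp :: "'v clause set \<Rightarrow> 'v lit set \<Rightarrow> 'v lit set"
  for \<Phi> :: "'v clause set" and L0 :: "'v lit set" where
  init: "l \<in> L0 \<Longrightarrow> l \<in> ucp \<Phi> L0"
| step1: "(a, b) \<in> \<Phi> \<Longrightarrow> neg b \<in> ucp \<Phi> L0 \<Longrightarrow> a \<in> ucp \<Phi> L0"
| step2: "(a, b) \<in> \<Phi> \<Longrightarrow> neg a \<in> ucp \<Phi> L0 \<Longrightarrow> b \<in> ucp \<Phi> L0"

definition V0 :: "'v clause set \<Rightarrow> 'v lit set \<Rightarrow> 'v set" where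
  "V0 \<Phi> L0 = {x. Pos x \<in> ucp \<Phi> L0 \<and> Neg x \<in> ucp \<Phi> L0}"

definition conflict_clauses :: "'v clause set \<Rightarrow> 'v lit set \<Rightarrow> 'v clause set" where
  "conflict_clauses \<Phi> L0 = {c \<in> \<Phi>. clause_vars c \<subseteq> V0 \<Phi> L0}"

definition pruned :: "'v clause set \<Rightarrow> 'v clause set" where
  "pruned \<Phi> = \<Phi> - (\<Union>l\<in>{l. var l \<in> cnf_vars \<Phi>}. conflict_clauses \<Phi> {l})"

fun lit_val :: "('v \<Rightarrow> bool) \<Rightarrow> 'v lit \<Rightarrow> bool" where
  "lit_val \<sigma> (Pos x) = \<sigma> x" | "lit_val \<sigma> (Neg x) = (\<not> \<sigma> x)"

definition satisfiable :: "'v clause set \<Rightarrow> bool" where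
  "satisfiable \<Phi> \<longleftrightarrow> (\<exists>\<sigma>. \<forall>c\<in>\<Phi>. lit_val \<sigma> (fst c) \<or> lit_val \<sigma> (snd c))"

end

theory Submission
  imports Defs
begin

lemma neg_neg[simp]: "neg (neg m) = m"
  by (cases m) auto

lemma var_neg[simp]: "var (neg m) = var m"
  by (cases m) auto

lemma lit_val_neg[simp]: "lit_val s (neg m) = (\<not> lit_val s m)"
  by (cases m) auto

lemma var_eq: "var m = var n \<Longrightarrow> m = n \<or> m = neg n"
  by (cases m; cases n) auto

lemma ucp_monoF: "m \<in> ucp F L \<Longrightarrow> F \<subseteq> G \<Longrightarrow> m \<in> ucp G L"
  by (induction rule: ucp.induct) (auto intro: ucp.intros)

lemma ucp_trans: "n \<in> ucp F {m} \<Longrightarrow> m \<in> ucp F L \<Longrightarrow> n \<in> ucp F L"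
  by (induction rule: ucp.induct) (auto intro: ucp.intros)

lemma ucp_contra: "m \<in> ucp F {l} \<Longrightarrow> neg l \<in> ucp F {neg m}"
proof (induction rule: ucp.induct)
  case (init l')
  then show ?case by (auto intro: ucp.init)
next
  case (step1 a b)
  have "b \<in> ucp F {neg a}" using step1(1) by (auto intro: ucp.intros)
  then show ?case using step1(3) ucp_trans by fastforce
next
  case (step2 a b)
  have "a \<in> ucp F {neg b}" using step2(1) by (auto intro: ucp.intros)
  then show ?case using step2(3) ucp_trans by fastforce
qed

lemma consistent:
  assumes "m \<in> ucp F {l}" "neg m \<in> ucp F {l}"
  shows "neg l \<in> ucp F {l}"
proof -
  have "neg l \<in> ucp F {neg m}" using ucp_contra[OF assms(1)] .
  then show ?thesis using ucp_trans assms(2) by blast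
qed

lemma core:
  assumes "finite S"
  shows "cnf_vars F \<subseteq> S \<Longrightarrow> (\<forall>y. Neg y \<notin> ucp F {Pos y}) \<Longrightarrow> satisfiable F"
  using assms
proof (induction S arbitrary: F rule: finite_induct)
  case empty
  then have "F = {}" unfolding cnf_vars_def clause_vars_def by auto
  then show ?case unfolding satisfiable_def by auto
next
  case (insert x S)
  define L where "L = ucp F {Pos x}"
  have cons: "\<not> (m \<in> L \<and> neg m \<in> L)" for m
    using consistent[of m F "Pos x"] insert.prems(2) unfolding L_def by auto
  have xL: "Pos x \<in> L" unfolding L_def by (auto intro: ucp.init)
  define F' where "F' = {c\<in>F. var (fst c) \<notin> var ` L \<and> var (snd c) \<notin> var ` L}"
  have "cnf_vars F' \<subseteq> S"
  proof
    fix v assume "v \<in> cnf_vars F'"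
    then obtain c where c: "c \<in> F'" "v \<in> clause_vars c" unfolding cnf_vars_def by auto
    then have "v \<in> insert x S" using insert.prems(1) unfolding cnf_vars_def F'_def by auto
    moreover have "x \<in> var ` L" using xL by force
    then have "v \<noteq> x" using c unfolding F'_def clause_vars_def by (metis (no_types, lifting) empty_iff insert_iff mem_Collect_eq)
    ultimately show "v \<in> S" by auto
  qed
  moreover have "\<forall>y. Neg y \<notin> ucp F' {Pos y}"
    using insert.prems(2) ucp_monoF[of _ F' _ F] unfolding F'_def by auto
  ultimately obtain s' where s': "\<forall>c\<in>F'. lit_val s' (fst c) \<or> lit_val s' (snd c)"
    using insert.IH unfolding satisfiable_def by blast
  define s where "s y = (if Pos y \<in> L then True else if Neg y \<in> L then False else s' y)" for y
  have sL: "lit_val s m" if "m \<in> L" for m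
    using that cons[of m] by (cases m) (auto simp: s_def)
  have sO: "lit_val s m = lit_val s' m" if "var m \<notin> var ` L" for m
    using that by (cases m) (auto simp: s_def image_iff)
  have "lit_val s a \<or> lit_val s b" if ab: "(a, b) \<in> F" for a b
  proof (cases "(a, b) \<in> F'")
    case True
    then show ?thesis using s' sO unfolding F'_def by auto
  next
    case False
    then have "var a \<in> var ` L \<or> var b \<in> var ` L" using ab unfolding F'_def by auto
    then show ?thesis
    proof
      assume "var a \<in> var ` L"
      then obtain n where n: "n \<in> L" "var a = var n" by auto
      then have "a \<in> L \<or> neg a \<in> L" using var_eq[OF n(2)] by auto
      then show ?thesis
      proof
        assume "neg a \<in> L" then have "b \<in> L" using ab unfolding L_def by (auto intro: ucp.step2)
        then show ?thesis using sL by auto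
      qed (use sL in auto)
    next
      assume "var b \<in> var ` L"
      then obtain n where n: "n \<in> L" "var b = var n" by auto
      then have "b \<in> L \<or> neg b \<in> L" using var_eq[OF n(2)] by auto
      then show ?thesis
      proof
        assume "neg b \<in> L" then have "a \<in> L" using ab unfolding L_def by (auto intro: ucp.step1)
        then show ?thesis using sL by auto
      qed (use sL in auto)
    qed
  qed
  then show ?case unfolding satisfiable_def by (metis prod.collapse)
qed

theorem fact2p2:
  fixes \<Phi> :: "'v clause set"
  assumes "is_2cnf \<Phi>"
  shows "satisfiable (pruned \<Phi>)"
proof -
  let ?P = "pruned \<Phi>"
  have sub: "?P \<subseteq> \<Phi>" unfolding pruned_def by auto
  have fin: "finite (cnf_vars \<Phi>)"
    using assms unfolding is_2cnf_def cnf_vars_def clause_vars_def by auto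
  have "cnf_vars ?P \<subseteq> cnf_vars \<Phi>" using sub unfolding cnf_vars_def by auto
  moreover have "\<forall>y. Neg y \<notin> ucp ?P {Pos y}"
  proof (intro allI notI)
    fix y assume h: "Neg y \<in> ucp ?P {Pos y}"
    have hF: "Neg y \<in> ucp \<Phi> {Pos y}" using ucp_monoF[OF h sub] .
    have py: "Pos y \<in> ucp \<Phi> {Pos y}" by (auto intro: ucp.init)
    from h show False
    proof (cases rule: ucp.cases)
      case init then show ?thesis by auto
    next
      case (step1 b)
      have c: "(Neg y, b) \<in> \<Phi>" using step1 sub by auto
      have nb: "neg b \<in> ucp \<Phi> {Pos y}" using ucp_monoF[OF step1(2) sub] .
      have bb: "b \<in> ucp \<Phi> {Pos y}" using ucp.step2[OF c] py by auto
      have "y \<in> V0 \<Phi> {Pos y}" using hF py unfolding V0_def by auto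
      moreover have "var b \<in> V0 \<Phi> {Pos y}" using nb bb unfolding V0_def by (cases b) auto
      ultimately have "(Neg y, b) \<in> conflict_clauses \<Phi> {Pos y}"
        using c unfolding conflict_clauses_def clause_vars_def by auto
      moreover have "var (Pos y) \<in> cnf_vars \<Phi>"
        using c unfolding cnf_vars_def clause_vars_def by force
      ultimately show False using step1(1) unfolding pruned_def by blast
    next
      case (step2 a)
      have c: "(a, Neg y) \<in> \<Phi>" using step2 sub by auto
      have na: "neg a \<in> ucp \<Phi> {Pos y}" using ucp_monoF[OF step2(2) sub] .
      have aa: "a \<in> ucp \<Phi> {Pos y}" using ucp.step1[OF c] py by auto
      have "y \<in> V0 \<Phi> {Pos y}" using hF py unfolding V0_def by auto
      moreover have "var a \<in> V0 \<Phi> {Pos y}" using na aa unfolding V0_def by (cases a) auto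
      ultimately have "(a, Neg y) \<in> conflict_clauses \<Phi> {Pos y}"
        using c unfolding conflict_clauses_def clause_vars_def by auto
      moreover have "var (Pos y) \<in> cnf_vars \<Phi>"
        using c unfolding cnf_vars_def clause_vars_def by force
      ultimately show False using step2(1) unfolding pruned_def by blast
    qed
  qed
  ultimately show ?thesis using core[OF fin] by blast
qed

end
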